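(* Let $n\ge 2$ and let $k_n$ be the maximum diameter of a connected component of the cyclic shift graph $K({\mathsf{plac}}_n)$. Then $n-1\le k_n\le 2n-3$.
   Context: Let $\mathcal{A}=\{1<2<3<\cdots\}$ be the ordered alphabet of positive integers and $\mathcal{A}_n=\{1<2<\cdots<n\}$. For a monoid $M$ and $s,t\in M$, write $s\sim t$ if there exist $x,y\in M$ with $s=xy$ and $t=yx$ (a cyclic shift); $\sim^*$ is the reflexive–transitive closure of $\sim$. The cyclic shift graph $K(M)$ is the undirected graph with vertex set $M$ and an edge between $s$ and $t$ iff $s\sim t$; its connected components are the $\sim^*$-classes, and distances/diameters are graph distances in $K(M)$. The evaluation of a word $w$ is the tuple $(|w|_a)_{a}$ giving the number of occurrences of each letter $a$; all monoids considered are defined by presentations whose defining relations preserve evaluation, so the evaluation of an element is well defined, and $s\equiv_{\mathrm{ev}} t$ means $s$ and $t$ have the same evaluation. The plactic monoid of rank $n$, ${\mathsf{plac}}_n$, is $\mathcal{A}_n^*$ modulo the congruence generated by the Knuth relations $acb=cab$ for letters $a\le b<c$ and $bac=bca$ for letters $a<b\le c$ (all letters in $\mathcal{A}_n$). It is known (and may be used) that connected components of $K({\mathsf{plac}}_n)$ are exactly the $\equiv_{\mathrm{ev}}$-classes, and that elements of ${\mathsf{plac}}_n$ correspond bijectively to semistandard Young tableaux with entries in $\mathcal{A}_n$ via Schensted insertion. *)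

theory Defs
  imports Main "HOL-Library.Extended_Nat"
begin

inductive knuth_step :: "nat \<Rightarrow> nat list \<Rightarrow> nat list \<Rightarrow> bool" for n :: nat where
  knuth1: "\<lbrakk> u \<in> lists {1..n}; v \<in> lists {1..n}; a \<in> {1..n}; b \<in> {1..n}; c \<in> {1..n};
            a \<le> b; b < c \<rbrakk> \<Longrightarrow> knuth_step n (u @ [a, c, b] @ v) (u @ [c, a, b] @ v)"
| knuth2: "\<lbrakk> u \<in> lists {1..n}; v \<in> lists {1..n}; a \<in> {1..n}; b \<in> {1..n}; c \<in> {1..n};
            a < b; b \<le> c \<rbrakk> \<Longrightarrow> knuth_step n (u @ [b, a, c] @ v) (u @ [b, c, a] @ v)"

definition plac_equiv :: "nat \<Rightarrow> nat list \<Rightarrow> nat list \<Rightarrow> bool" where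
  "plac_equiv n = equivclp (knuth_step n)"

(* The element of plac_n represented by the word w: its congruence class. *)
definition plac_class :: "nat \<Rightarrow> nat list \<Rightarrow> nat list set" where
  "plac_class n w = {v \<in> lists {1..n}. plac_equiv n w v}"

definition plac_elems :: "nat \<Rightarrow> nat list set set" where
  "plac_elems n = plac_class n ` lists {1..n}"

(* Cyclic shift s ~ t in plac_n: s = xy and t = yx for some x, y in plac_n;
   the product of the classes of words x and y is the class of x @ y. *)
definition plac_cshift :: "nat \<Rightarrow> nat list set \<Rightarrow> nat list set \<Rightarrow> bool" where
  "plac_cshift n s t \<longleftrightarrow> (\<exists>x \<in> lists {1..n}. \<exists>y \<in> lists {1..n}.
       s = plac_class n (x @ y) \<and> t = plac_class n (y @ x))"

(* Graph distance in the cyclic shift graph K(plac_n) (meaningful for connected s, t). *)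
definition plac_dist :: "nat \<Rightarrow> nat list set \<Rightarrow> nat list set \<Rightarrow> nat" where
  "plac_dist n s t = (LEAST k. (plac_cshift n ^^ k) s t)"

definition plac_component :: "nat \<Rightarrow> nat list set \<Rightarrow> nat list set set" where
  "plac_component n s = {t. (plac_cshift n)\<^sup>*\<^sup>* s t}"

definition comp_diameter :: "nat \<Rightarrow> nat list set set \<Rightarrow> enat" where
  "comp_diameter n C = (SUP p \<in> C \<times> C. enat (plac_dist n (fst p) (snd p)))"

definition k_plac :: "nat \<Rightarrow> enat" where
  "k_plac n = (SUP s \<in> plac_elems n. comp_diameter n (plac_component n s))"

end

theory Submission imports Defs "HOL-Library.Multiset" begin

abbreviation L where "L n \<equiv> lists {1..(n::nat)}"

lemma knuth_step_lists: "knuth_step n w w' \<Longrightarrow> w \<in> L n \<and> w' \<in> L n"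
  by (induction rule: knuth_step.induct) auto

lemma knuth_step_mset: "knuth_step n w w' \<Longrightarrow> mset w = mset w'"
  by (induction rule: knuth_step.induct) (auto simp: add_mset_commute)

lemma knuth_step_ctx:
  assumes "knuth_step n w w'" "u \<in> L n" "v \<in> L n"
  shows "knuth_step n (u @ w @ v) (u @ w' @ v)"
  using assms(1)
proof (cases rule: knuth_step.cases)
  case (knuth1 u' v' a b c)
  then show ?thesis using knuth_step.knuth1[of "u@u'" n "v'@v" a b c] assms by auto
next
  case (knuth2 u' v' a b c)
  then show ?thesis using knuth_step.knuth2[of "u@u'" n "v'@v" a b c] assms by auto
qed

lemma pe_refl: "plac_equiv n w w"
  unfolding plac_equiv_def by (simp add: reflpD)

lemma pe_sym: "plac_equiv n w w' \<Longrightarrow> plac_equiv n w' w"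
  unfolding plac_equiv_def by (rule equivclp_sym)

lemma pe_trans: "plac_equiv n w w' \<Longrightarrow> plac_equiv n w' w'' \<Longrightarrow> plac_equiv n w w''"
  unfolding plac_equiv_def by (meson transpD transp_equivclp)

lemma pe_step: "knuth_step n w w' \<Longrightarrow> plac_equiv n w w'"
  unfolding plac_equiv_def equivclp_def by (simp add: r_into_rtranclp symclpI)

lemma pe_induct[consumes 1, case_names base step]:
  assumes "plac_equiv n a b" "P a"
    "\<And>y z. knuth_step n y z \<or> knuth_step n z y \<Longrightarrow> P y \<Longrightarrow> P z"
  shows "P b"
  using assms(1) unfolding plac_equiv_def
  by (induction rule: equivclp_induct) (use assms in blast)+

lemma pe_ctx:
  assumes "plac_equiv n w w'" "u \<in> L n" "v \<in> L n"
  shows "plac_equiv n (u @ w @ v) (u @ w' @ v)"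
  using assms(1)
proof (induction rule: pe_induct)
  case base show ?case by (rule pe_refl)
next
  case (step y z)
  from step(1) have "plac_equiv n (u @ y @ v) (u @ z @ v)"
  proof
    assume "knuth_step n y z" then show ?thesis using assms(2,3) knuth_step_ctx pe_step by blast
  next
    assume "knuth_step n z y" then show ?thesis using assms(2,3) knuth_step_ctx pe_step pe_sym by blast
  qed
  then show ?case using step(2) pe_trans by blast
qed

lemma pe_mset: "plac_equiv n w w' \<Longrightarrow> mset w = mset w'"
  by (induction rule: pe_induct) (auto dest: knuth_step_mset)

lemma pe_lists: "plac_equiv n w w' \<Longrightarrow> w \<in> L n \<Longrightarrow> w' \<in> L n"
proof -
  assume a: "plac_equiv n w w'" "w \<in> L n"
  have "set w = set w'" using pe_mset[OF a(1)] by (metis set_mset_mset)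
  then show ?thesis using a(2) by (simp add: lists_eq_set)
qed

lemma class_eq_iff:
  assumes "w \<in> L n" "w' \<in> L n"
  shows "plac_class n w = plac_class n w' \<longleftrightarrow> plac_equiv n w w'"
proof
  assume "plac_class n w = plac_class n w'"
  moreover have "w' \<in> plac_class n w'" using assms pe_refl unfolding plac_class_def by auto
  ultimately show "plac_equiv n w w'" unfolding plac_class_def by auto
next
  assume "plac_equiv n w w'"
  then show "plac_class n w = plac_class n w'" unfolding plac_class_def
    using pe_sym pe_trans by blast
qed

lemma sorted_le_last: "sorted W \<Longrightarrow> z \<in> set W \<Longrightarrow> z \<le> last W"
  by (induction W) (auto simp: last_ConsR)

lemma L1:
  assumes "sorted r" "\<forall>z\<in>set r. z \<le> d" "d < c" "u @ r @ [c, d] @ v \<in> L n"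
  shows "plac_equiv n (u @ r @ [c, d] @ v) (u @ [c] @ r @ [d] @ v)"
  using assms
proof (induction r arbitrary: d v rule: rev_induct)
  case Nil
  then show ?case by (simp add: pe_refl)
next
  case (snoc z r')
  have z: "z \<le> d" using snoc.prems by auto
  have st: "knuth_step n ((u@r')@[z,c,d]@v) ((u@r')@[c,z,d]@v)"
    apply (rule knuth_step.knuth1) using snoc.prems z by auto
  have ih: "plac_equiv n (u @ r' @ [c, z] @ (d#v)) (u @ [c] @ r' @ [z] @ (d#v))"
    apply (rule snoc.IH) using snoc.prems z by (auto simp: sorted_append)
  show ?case using pe_trans[OF pe_step[OF st]] ih by simp
qed

lemma L2:
  assumes "x < b" "sorted (b # B)" "u @ [b] @ B @ [x] @ v \<in> L n"
  shows "plac_equiv n (u @ [b] @ B @ [x] @ v) (u @ [b, x] @ B @ v)"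
  using assms
proof (induction B arbitrary: b u)
  case Nil
  then show ?case by (simp add: pe_refl)
next
  case (Cons e B)
  have ih: "plac_equiv n ((u@[b]) @ [e] @ B @ [x] @ v) ((u@[b]) @ [e, x] @ B @ v)"
    apply (rule Cons.IH) using Cons.prems by auto
  have st: "knuth_step n (u@[b,x,e]@(B@v)) (u@[b,e,x]@(B@v))"
    apply (rule knuth_step.knuth2) using Cons.prems by auto
  have ih': "plac_equiv n (u @ [b] @ (e#B) @ [x] @ v) (u @ [b,e,x] @ B @ v)" using ih by simp
  show ?case using pe_trans[OF ih' pe_sym[OF pe_step[OF st]]] by simp
qed

lemma main:
  assumes "sorted R" "\<forall>z\<in>set R. z \<le> p" "R \<in> L n" "v \<in> lists {p..n}" "1 \<le> p"
  shows "\<exists>Z c W. plac_equiv n (R @ v) (Z @ R @ replicate c p @ W) \<and>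
           Z \<in> lists {p<..n} \<and> W \<in> lists {p<..n} \<and> sorted W"
  using assms(4)
proof (induction v rule: rev_induct)
  case Nil
  show ?case by (rule exI[of _ "[]"], rule exI[of _ 0], rule exI[of _ "[]"]) (simp add: pe_refl)
next
  case (snoc x v)
  then obtain Z c W where e: "plac_equiv n (R @ v) (Z @ R @ replicate c p @ W)"
    and Z: "Z \<in> lists {p<..n}" and W: "W \<in> lists {p<..n}" "sorted W" by auto
  have x: "p \<le> x" "x \<le> n" using snoc.prems by auto
  have pn: "p \<le> n" using x by simp
  have RL: "R @ replicate c p \<in> L n" using assms(3,5) pn by auto
  have ZL: "Z \<in> L n" "W \<in> L n" using Z W assms(5) by auto
  have e1: "plac_equiv n (R @ v @ [x]) (Z @ R @ replicate c p @ W @ [x])"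
    using pe_ctx[OF e, of "[]" "[x]"] x assms(5) by simp
  show ?case
  proof (cases "x = p")
    case True
    show ?thesis
    proof (cases W)
      case Nil
      then show ?thesis using e1 True Z
        by (intro exI[of _ Z] exI[of _ "Suc c"] exI[of _ "[]"]) (simp add: replicate_append_same[symmetric])
    next
      case (Cons y B)
      have y: "p < y" "y \<le> n" "\<forall>z\<in>set B. y \<le> z" "sorted B" "B \<in> lists {p<..n}"
        using W Cons by auto
      have a: "plac_equiv n ((Z @ R @ replicate c p) @ [y] @ B @ [p] @ [])
                 ((Z @ R @ replicate c p) @ [y, p] @ B @ [])"
        apply (rule L2) using y W Cons ZL RL assms(5) pn by (auto simp: sorted_append)
      have b: "plac_equiv n (Z @ (R @ replicate c p) @ [y, p] @ B)
                 (Z @ [y] @ (R @ replicate c p) @ [p] @ B)"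
        apply (rule L1) using y W Cons ZL RL assms(1,2,5) pn
        by (auto simp: sorted_append)
      have "plac_equiv n (R @ v @ [x]) ((Z@[y]) @ R @ replicate (Suc c) p @ B)"
        using pe_trans[OF e1 pe_trans[OF _ b]] a True Cons
        by (simp add: replicate_append_same[symmetric])
      then show ?thesis using Z y W Cons
        by (intro exI[of _ "Z@[y]"] exI[of _ "Suc c"] exI[of _ B]) auto
    qed
  next
    case False
    then have xp: "p < x" using x by simp
    show ?thesis
    proof (cases "W = [] \<or> last W \<le> x")
      case True
      have "sorted (W @ [x])" using W True sorted_le_last[of W] by (auto simp: sorted_append intro: order_trans)
      then show ?thesis using e1 Z W xp x
        by (intro exI[of _ Z] exI[of _ c] exI[of _ "W@[x]"]) simp
    next
      case False
      define A where "A = takeWhile (\<lambda>z. z \<le> x) W"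
      define D where "D = dropWhile (\<lambda>z. z \<le> x) W"
      have WAD: "W = A @ D" unfolding A_def D_def by simp
      have "D \<noteq> []" using False unfolding D_def
        by (simp add: dropWhile_eq_Nil_conv) (use last_in_set in fastforce)
      then obtain y B where D: "D = y # B" by (cases D) auto
      have yx: "x < y" using D unfolding D_def
        by (simp add: dropWhile_eq_Cons_conv)
      have Ax: "\<forall>z\<in>set A. z \<le> x" unfolding A_def by (meson set_takeWhileD)
      have sW: "sorted (A @ [y] @ B)" using W WAD D by simp
      have By: "\<forall>z\<in>set B. y \<le> z" "sorted B" "sorted A" using sW by (auto simp: sorted_append)
      have AB: "A \<in> lists {p<..n}" "y \<in> {p<..n}" "B \<in> lists {p<..n}" using W WAD D by auto
      have a: "plac_equiv n ((Z @ R @ replicate c p @ A) @ [y] @ B @ [x] @ [])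
                 ((Z @ R @ replicate c p @ A) @ [y, x] @ B @ [])"
        apply (rule L2) using yx By AB ZL RL assms(5) pn x by (auto simp: sorted_append)
      have b: "plac_equiv n (Z @ (R @ replicate c p @ A) @ [y, x] @ B)
                 (Z @ [y] @ (R @ replicate c p @ A) @ [x] @ B)"
      proof -
        have RA: "\<forall>a\<in>set R. \<forall>b\<in>set A. a \<le> b" using assms(2) AB(1) by fastforce
        show ?thesis
          apply (rule L1) using yx By AB ZL RL assms(1,2,5) pn x xp Ax RA
          by (auto simp: sorted_append)
      qed
      have "plac_equiv n (R @ v @ [x]) ((Z@[y]) @ R @ replicate c p @ (A @ [x] @ B))"
        using pe_trans[OF e1 pe_trans[OF _ b]] a WAD D by simp
      moreover have "sorted (A @ [x] @ B)" using By Ax yx by (auto simp: sorted_append) (metis bspec dual_order.trans less_imp_le)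
      ultimately show ?thesis using Z AB xp x by (intro exI[of _ "Z@[y]"] exI[of _ c] exI[of _ "A@[x]@B"]) auto
    qed
  qed
qed

abbreviation cs where "cs n \<equiv> plac_cshift n"

lemma cs_rot: "x \<in> L n \<Longrightarrow> y \<in> L n \<Longrightarrow> cs n (plac_class n (x@y)) (plac_class n (y@x))"
  unfolding plac_cshift_def by blast

lemma cs_sym: "cs n s t \<Longrightarrow> cs n t s"
  unfolding plac_cshift_def by blast

lemma class_eq: "plac_equiv n w w' \<Longrightarrow> plac_class n w = plac_class n w'"
  unfolding plac_class_def using pe_sym pe_trans by blast

lemma path_j:
  assumes "w \<in> L n" "j < n"
  shows "\<exists>R v. (cs n ^^ j) (plac_class n w) (plac_class n (R @ v)) \<and> sorted R \<and> R \<in> L n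
     \<and> (\<forall>z\<in>set R. z \<le> j) \<and> v \<in> lists {Suc j..n}"
  using assms(2)
proof (induction j)
  case 0
  show ?case using assms(1)
    by (intro exI[of _ "[]"] exI[of _ w]) auto
next
  case (Suc j)
  then obtain R v where p: "(cs n ^^ j) (plac_class n w) (plac_class n (R @ v))" and
    R: "sorted R" "R \<in> L n" "\<forall>z\<in>set R. z \<le> j" and v: "v \<in> lists {Suc j..n}" by auto
  obtain Z c W where e: "plac_equiv n (R @ v) (Z @ R @ replicate c (Suc j) @ W)"
    and Z: "Z \<in> lists {Suc j<..n}" and W: "W \<in> lists {Suc j<..n}" "sorted W"
    using main[of R "Suc j" n v] R v by fastforce
  have ZL: "Z \<in> L n" and RL: "R @ replicate c (Suc j) @ W \<in> L n" using Z W R Suc.prems by auto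
  have "cs n (plac_class n (Z @ (R @ replicate c (Suc j) @ W))) (plac_class n ((R @ replicate c (Suc j) @ W) @ Z))"
    by (rule cs_rot[OF ZL RL])
  then have "cs n (plac_class n (R @ v)) (plac_class n ((R @ replicate c (Suc j)) @ (W @ Z)))"
    using class_eq[OF e] by simp
  moreover have "sorted (R @ replicate c (Suc j))" using R by (auto simp: sorted_append)
  moreover have "\<forall>z\<in>set (R @ replicate c (Suc j)). z \<le> Suc j" using R by auto
  moreover have "R @ replicate c (Suc j) \<in> L n" using R Suc.prems by auto
  moreover have "W @ Z \<in> lists {Suc (Suc j)..n}" using Z W by auto
  ultimately show ?case using relpowp_Suc_I[OF p] by blast
qed

lemma path_C:
  assumes "w \<in> L n" "2 \<le> n"
  shows "\<exists>a Q b. (cs n ^^ (n-2)) (plac_class n w) (plac_class n (replicate a n @ Q @ replicate b n))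
     \<and> sorted Q \<and> Q \<in> lists {1..n-1}"
proof -
  obtain R v where p: "(cs n ^^ (n-2)) (plac_class n w) (plac_class n (R @ v))" and
    R: "sorted R" "R \<in> L n" "\<forall>z\<in>set R. z \<le> n-2" and v: "v \<in> lists {Suc (n-2)..n}"
    using path_j[OF assms(1), of "n-2"] assms(2) by auto
  obtain Z c W where e: "plac_equiv n (R @ v) (Z @ R @ replicate c (n-1) @ W)"
    and Z: "Z \<in> lists {n-1<..n}" and W: "W \<in> lists {n-1<..n}"
    using main[of R "n-1" n v] R v assms(2) by (fastforce simp: Suc_diff_Suc numeral_2_eq_2)
  have Z': "replicate (length Z) n = Z"
  proof (intro replicate_length_same ballI)
    fix y assume "y \<in> set Z" then have "n-1 < y" "y \<le> n" using Z by auto thus "y = n" by linarith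
  qed
  have W': "replicate (length W) n = W"
  proof (intro replicate_length_same ballI)
    fix y assume "y \<in> set W" then have "n-1 < y" "y \<le> n" using W by auto thus "y = n" by linarith
  qed
  have "(cs n ^^ (n-2)) (plac_class n w) (plac_class n (replicate (length Z) n @ (R @ replicate c (n-1)) @ replicate (length W) n))"
    using p class_eq[OF e] Z' W' by simp
  moreover have "sorted (R @ replicate c (n-1))" using R by (auto simp: sorted_append)
  moreover have "R @ replicate c (n-1) \<in> lists {1..n-1}" using R assms(2) by auto
  ultimately show ?thesis by blast
qed


lemma C_rot:
  assumes "sorted Q" "sorted Q'" "Q \<in> lists {1..n-1}" "Q' \<in> lists {1..n-1}" "1 \<le> n"
    and m: "mset (replicate a n @ Q @ replicate b n) = mset (replicate a' n @ Q' @ replicate b' n)"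
  shows "cs n (plac_class n (replicate a n @ Q @ replicate b n)) (plac_class n (replicate a' n @ Q' @ replicate b' n))"
proof -
  have nQ: "n \<notin> set Q" "n \<notin> set Q'" using assms(3,4,5) by auto
  have f1: "filter (\<lambda>x. x \<noteq> n) (replicate a n @ Q @ replicate b n) = Q"
    using nQ by (auto simp: filter_id_conv)
  have f2: "filter (\<lambda>x. x \<noteq> n) (replicate a' n @ Q' @ replicate b' n) = Q'"
    using nQ by (auto simp: filter_id_conv)
  have "mset Q = mset Q'" using m f1 f2 by (metis mset_filter)
  then have QQ: "Q = Q'" using properties_for_sort assms(1,2) by metis
  have "count (mset (replicate a n @ Q @ replicate b n)) n = count (mset (replicate a' n @ Q' @ replicate b' n)) n"
    using m by simp
  then have ab: "a + b = a' + b'" using nQ by (simp add: count_mset_0_iff[symmetric] del: count_mset_0_iff)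
  have L: "Q \<in> L n"
  proof -
    { fix x assume "x \<in> set Q" then have "1 \<le> x" "x \<le> n - 1" using assms(3) by auto
      then have "x \<in> {1..n}" by simp }
    then show ?thesis by auto
  qed
  show ?thesis
  proof (cases "a' \<le> a")
    case True
    have "cs n (plac_class n (replicate (a-a') n @ (replicate a' n @ Q @ replicate b n)))
      (plac_class n ((replicate a' n @ Q @ replicate b n) @ replicate (a-a') n))"
      by (rule cs_rot) (use L assms(5) in auto)
    moreover have "replicate (a-a') n @ replicate a' n = replicate a n" using True
      by (metis le_add_diff_inverse2 replicate_add)
    moreover have "replicate b n @ replicate (a-a') n = replicate b' n" using True ab
      by (metis add.commute add_diff_assoc2 add_diff_cancel_left' replicate_add)
    ultimately show ?thesis using QQ by (metis append_assoc)
  next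
    case False
    have "cs n (plac_class n ((replicate a n @ Q @ replicate b' n) @ replicate (a'-a) n))
      (plac_class n (replicate (a'-a) n @ (replicate a n @ Q @ replicate b' n)))"
      by (rule cs_rot) (use L assms(5) in auto)
    moreover have "replicate (a'-a) n @ replicate a n = replicate a' n" using False
      by (metis le_add_diff_inverse2 nat_le_linear replicate_add)
    moreover have "replicate b' n @ replicate (a'-a) n = replicate b n" using False ab
      by (metis add.commute add_diff_assoc2 add_diff_cancel_left' nat_le_linear replicate_add)
    ultimately show ?thesis using QQ by (metis append_assoc)
  qed
qed

lemma lists_sub: "Q \<in> lists {1..n-1} \<Longrightarrow> Q \<in> L n"
proof -
  assume a: "Q \<in> lists {1..n-1}"
  { fix x assume "x \<in> set Q" then have "1 \<le> x" "x \<le> n - 1" using a by auto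
    then have "x \<in> {1..n}" by simp }
  then show ?thesis by auto
qed

lemma comp_class:
  assumes "(cs n)\<^sup>*\<^sup>* s t" "s = plac_class n w0" "w0 \<in> L n"
  shows "\<exists>w\<in>L n. t = plac_class n w \<and> mset w = mset w0"
  using assms(1)
proof (induction rule: rtranclp_induct)
  case base then show ?case using assms by auto
next
  case (step m t)
  then obtain w1 where w1: "w1 \<in> L n" "m = plac_class n w1" "mset w1 = mset w0" by auto
  from step(2) obtain x y where xy: "x \<in> L n" "y \<in> L n" "m = plac_class n (x@y)" "t = plac_class n (y@x)"
    unfolding plac_cshift_def by blast
  have "plac_equiv n (x@y) w1" using class_eq_iff[of "x@y" n w1] xy w1 by auto
  then have "mset (x@y) = mset w0" using pe_mset w1 by metis
  then show ?case using xy by (intro bexI[of _ "y@x"]) (auto simp: add.commute)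
qed

lemma class_mset: "plac_class n w = plac_class n w' \<Longrightarrow> w \<in> L n \<Longrightarrow> w' \<in> L n \<Longrightarrow> mset w = mset w'"
  using class_eq_iff pe_mset by blast

lemma pow_sym: "(cs n ^^ k) s t \<Longrightarrow> (cs n ^^ k) t s"
proof (induction k arbitrary: t)
  case 0 then show ?case by simp
next
  case (Suc k)
  then obtain m where "(cs n ^^ k) s m" "cs n m t" by (meson relpowp_Suc_E)
  then show ?case using Suc.IH cs_sym relpowp_Suc_I2 by metis
qed

lemma upper_path:
  assumes "2 \<le> n" "s \<in> plac_elems n" "t \<in> plac_component n s" "t' \<in> plac_component n s"
  shows "(cs n ^^ (2*n-3)) t t'"
proof -
  obtain w0 where w0: "w0 \<in> L n" "s = plac_class n w0" using assms(2) unfolding plac_elems_def by auto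
  obtain w where w: "w \<in> L n" "t = plac_class n w" "mset w = mset w0"
    using comp_class[of n s t w0] assms(3) w0 unfolding plac_component_def by auto
  obtain w' where w': "w' \<in> L n" "t' = plac_class n w'" "mset w' = mset w0"
    using comp_class[of n s t' w0] assms(4) w0 unfolding plac_component_def by auto
  obtain a Q b where p1: "(cs n ^^ (n-2)) t (plac_class n (replicate a n @ Q @ replicate b n))"
    and Q: "sorted Q" "Q \<in> lists {1..n-1}" using path_C[OF w(1) assms(1)] w(2) by auto
  obtain a' Q' b' where p2: "(cs n ^^ (n-2)) t' (plac_class n (replicate a' n @ Q' @ replicate b' n))"
    and Q': "sorted Q'" "Q' \<in> lists {1..n-1}" using path_C[OF w'(1) assms(1)] w'(2) by auto
  have QL: "Q \<in> L n" "Q' \<in> L n" using Q Q' lists_sub by auto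
  have L1: "replicate a n @ Q @ replicate b n \<in> L n" using QL assms(1) by auto
  have L2: "replicate a' n @ Q' @ replicate b' n \<in> L n" using QL assms(1) by auto
  obtain u1 where u1: "u1 \<in> L n" "plac_class n (replicate a n @ Q @ replicate b n) = plac_class n u1" "mset u1 = mset w"
    using comp_class[OF relpowp_imp_rtranclp[OF p1] w(2) w(1)] by auto
  obtain u2 where u2: "u2 \<in> L n" "plac_class n (replicate a' n @ Q' @ replicate b' n) = plac_class n u2" "mset u2 = mset w'"
    using comp_class[OF relpowp_imp_rtranclp[OF p2] w'(2) w'(1)] by auto
  have "mset (replicate a n @ Q @ replicate b n) = mset (replicate a' n @ Q' @ replicate b' n)"
    using class_mset[OF u1(2) L1 u1(1)] class_mset[OF u2(2) L2 u2(1)] u1(3) u2(3) w(3) w'(3) by simp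
  then have c: "cs n (plac_class n (replicate a n @ Q @ replicate b n)) (plac_class n (replicate a' n @ Q' @ replicate b' n))"
    using C_rot Q Q' assms(1) by simp
  have "(cs n ^^ (Suc (n-2) + (n-2))) t t'"
    using relpowp_trans[OF relpowp_Suc_I[OF p1 c] pow_sym[OF p2]] .
  moreover have "Suc (n-2) + (n-2) = 2*n-3" using assms(1) by simp
  ultimately show ?thesis by metis
qed

lemma upper:
  assumes "2 \<le> n"
  shows "k_plac n \<le> enat (2*n-3)"
  unfolding k_plac_def comp_diameter_def
proof (intro SUP_least, clarify)
  fix s t t' assume a: "s \<in> plac_elems n" "t \<in> plac_component n s" "t' \<in> plac_component n s"
  have "plac_dist n t t' \<le> 2*n-3" unfolding plac_dist_def
    using upper_path[OF assms a] by (rule Least_le)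
  then show "enat (plac_dist n (fst (t,t')) (snd (t,t'))) \<le> enat (2*n-3)" by simp
qed

fun bef :: "nat list \<Rightarrow> nat \<Rightarrow> nat \<Rightarrow> bool" where
  "bef [] x y = False"
| "bef (z#zs) x y = ((z = x \<and> y \<in> set zs) \<or> bef zs x y)"

lemma bef_append: "bef (xs@ys) x y = (bef xs x y \<or> bef ys x y \<or> (x \<in> set xs \<and> y \<in> set ys))"
  by (induction xs) auto

lemma bef_set: "bef xs x y \<Longrightarrow> x \<in> set xs \<and> y \<in> set xs"
  by (induction xs) auto

definition Dz :: "nat \<Rightarrow> nat list \<Rightarrow> int" where
  "Dz n w = (\<Sum>i=1..<n. if bef w (Suc i) i then 1 else 0)"

lemma knuth_Dz: "knuth_step n w w' \<Longrightarrow> distinct w \<Longrightarrow> Dz n w = Dz n w'"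
proof (induction rule: knuth_step.induct)
  case (knuth1 u v a b c)
  then have abc: "a < b" "b < c" by auto
  have "\<And>i. bef [a,c,b] (Suc i) i = bef [c,a,b] (Suc i) i" using abc by auto
  then have "\<And>i. bef (u@[a,c,b]@v) (Suc i) i = bef (u@[c,a,b]@v) (Suc i) i"
    by (simp add: bef_append del: bef.simps) auto
  then show ?case unfolding Dz_def by simp
next
  case (knuth2 u v a b c)
  then have abc: "a < b" "b < c" by auto
  have "\<And>i. bef [b,a,c] (Suc i) i = bef [b,c,a] (Suc i) i" using abc by auto
  then have "\<And>i. bef (u@[b,a,c]@v) (Suc i) i = bef (u@[b,c,a]@v) (Suc i) i"
    by (simp add: bef_append del: bef.simps) auto
  then show ?case unfolding Dz_def by simp
qed

lemma pe_Dz: "plac_equiv n w w' \<Longrightarrow> distinct w \<Longrightarrow> Dz n w = Dz n w'"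
proof -
  assume e: "plac_equiv n w w'" and d: "distinct w"
  have "distinct w' \<and> Dz n w' = Dz n w" using e
  proof (induction rule: pe_induct)
    case base then show ?case using d by simp
  next
    case (step y z)
    have m: "mset y = mset z" using step(1) knuth_step_mset by metis
    then have dz: "distinct z" using step(2) mset_eq_imp_distinct_iff by metis
    from step(1) have "Dz n y = Dz n z" using knuth_Dz step(2) dz by metis
    then show ?case using dz step(2) by simp
  qed
  then show ?thesis by simp
qed

lemma rot_Dz:
  assumes "distinct (x@y)" "set (x@y) = {1..n}" "1 \<le> n"
  shows "Dz n (x@y) \<le> Dz n (y@x) + 1"
proof -
  define f where "f i = (if i \<in> set x then 1 else 0 :: int)" for i
  have t: "(if bef (x@y) (Suc i) i then 1 else 0) - (if bef (y@x) (Suc i) i then 1 else 0) = f (Suc i) - f i"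
    if "i \<in> {1..<n}" for i
  proof -
    have "i \<in> set (x@y)" "Suc i \<in> set (x@y)" using that assms(2) by auto
    then show ?thesis using assms(1) unfolding f_def
      by (auto simp: bef_append dest: bef_set)
  qed
  have "Dz n (x@y) - Dz n (y@x) = (\<Sum>i=1..<n. (if bef (x@y) (Suc i) i then 1 else 0) - (if bef (y@x) (Suc i) i then 1 else 0))"
    unfolding Dz_def by (simp add: sum_subtractf)
  also have "\<dots> = (\<Sum>i=1..<n. f (Suc i) - f i)" using t by (rule sum.cong[OF refl])
  also have "\<dots> = f n - f 1" using sum_Suc_diff'[OF assms(3)] .
  finally show ?thesis unfolding f_def by (auto split: if_splits)
qed

lemma std_facts: "mset w = mset [1..<Suc n] \<Longrightarrow> distinct w \<and> set w = {1..n}"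
  by (metis atLeastLessThanSuc_atLeastAtMost distinct_upt mset_eq_imp_distinct_iff mset_eq_setD set_upt)

lemma LB:
  assumes "(cs n ^^ k) s t" "s = plac_class n w0" "w0 \<in> L n" "mset w0 = mset [1..<Suc n]" "1 \<le> n"
  shows "t = plac_class n w \<Longrightarrow> w \<in> L n \<Longrightarrow> Dz n w0 \<le> Dz n w + int k"
  using assms(1)
proof (induction k arbitrary: t w)
  case 0
  then have "s = t" by simp
  then have "plac_equiv n w0 w" using 0 assms(2,3) class_eq_iff by metis
  then show ?case using pe_Dz std_facts assms(4) by fastforce
next
  case (Suc k)
  then obtain m where p: "(cs n ^^ k) s m" and c: "cs n m t" by (meson relpowp_Suc_E)
  from c obtain x y where xy: "x \<in> L n" "y \<in> L n" "m = plac_class n (x@y)" "t = plac_class n (y@x)"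
    unfolding plac_cshift_def by blast
  have ih: "Dz n w0 \<le> Dz n (x@y) + int k" using Suc.IH[of m "x@y"] p xy by simp
  obtain w1 where w1: "w1 \<in> L n" "m = plac_class n w1" "mset w1 = mset w0"
    using comp_class[OF relpowp_imp_rtranclp[OF p] assms(2,3)] by auto
  have "mset (x@y) = mset w1" using class_mset[of n "x@y" w1] xy w1 by simp
  then have m1: "mset (x@y) = mset [1..<Suc n]" using w1 assms(4) by simp
  then have m2: "mset (y@x) = mset [1..<Suc n]" by (simp add: add.commute)
  have r: "Dz n (x@y) \<le> Dz n (y@x) + 1" using rot_Dz std_facts[OF m1] assms(5) by blast
  have "plac_equiv n (y@x) w" using class_eq_iff[of "y@x" n w] xy Suc.prems by auto
  then have "Dz n (y@x) = Dz n w" using pe_Dz std_facts[OF m2] by blast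
  then show ?case using ih r by simp
qed

lemma bef_col: "bef (rev [1..<Suc m]) (Suc i) i \<longleftrightarrow> (1 \<le> i \<and> Suc i \<le> m)"
  by (induction m) auto

lemma bef_sorted: "sorted xs \<Longrightarrow> bef xs x y \<Longrightarrow> x \<le> y"
  by (induction xs) auto

lemma Dz_col: "Dz n (rev [1..<Suc n]) = int n - 1" if "1 \<le> n"
proof -
  have "Dz n (rev [1..<Suc n]) = (\<Sum>i=1..<n. 1)" unfolding Dz_def
  proof (rule sum.cong)
    fix x assume "x \<in> {1..<n}" then show "(if bef (rev [1..<Suc n]) (Suc x) x then 1 else 0) = (1::int)"
      using bef_col[of n x] by simp
  qed simp
  then show ?thesis using that by simp
qed

lemma Dz_row: "Dz n [1..<Suc n] = 0"
  unfolding Dz_def using bef_sorted[of "[1..<Suc n]"] by (auto intro!: sum.neutral simp del: upt_Suc) fastforce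

lemma lower:
  assumes "2 \<le> n"
  shows "enat (n-1) \<le> k_plac n"
proof -
  define col where "col = rev [1..<Suc n]"
  define row where "row = [1..<Suc n]"
  have colL: "col \<in> L n" and rowL: "row \<in> L n" unfolding col_def row_def by auto
  have mc: "mset col = mset [1..<Suc n]" unfolding col_def by simp
  define s0 where "s0 = plac_class n col"
  have s0: "s0 \<in> plac_elems n" unfolding s0_def plac_elems_def using colL by auto
  obtain a Q b where p1: "(cs n ^^ (n-2)) s0 (plac_class n (replicate a n @ Q @ replicate b n))"
    and Q: "sorted Q" "Q \<in> lists {1..n-1}" using path_C[OF colL assms] s0_def by auto
  have L1: "replicate a n @ Q @ replicate b n \<in> L n" using lists_sub[OF Q(2)] assms by auto
  obtain u1 where u1: "u1 \<in> L n" "plac_class n (replicate a n @ Q @ replicate b n) = plac_class n u1" "mset u1 = mset col"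
    using comp_class[OF relpowp_imp_rtranclp[OF p1] s0_def colL] by auto
  have rw: "replicate 0 n @ [1..<n] @ replicate 1 n = row" unfolding row_def using assms by simp
  have m: "mset (replicate a n @ Q @ replicate b n) = mset (replicate 0 n @ [1..<n] @ replicate 1 n)"
    using class_mset[OF u1(2) L1 u1(1)] u1(3) mc rw unfolding row_def by simp
  have srt: "sorted [1..<n]" and lst: "[1..<n] \<in> lists {1..n-1}" by auto
  have "cs n (plac_class n (replicate a n @ Q @ replicate b n)) (plac_class n (replicate 0 n @ [1..<n] @ replicate 1 n))"
    by (rule C_rot[OF Q(1) srt Q(2) lst _ m]) (use assms in simp)
  then have pr: "(cs n ^^ Suc (n-2)) s0 (plac_class n row)" using relpowp_Suc_I[OF p1] rw by simp
  define kk where "kk = plac_dist n s0 (plac_class n row)"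
  have "(cs n ^^ kk) s0 (plac_class n row)" unfolding kk_def plac_dist_def
    using pr by (rule LeastI)
  then have "Dz n col \<le> Dz n row + int kk" using LB[OF _ s0_def colL mc _ refl rowL] assms by simp
  moreover have dc: "Dz n col = int n - 1" unfolding col_def by (rule Dz_col) (use assms in simp)
  moreover have dr: "Dz n row = 0" unfolding row_def by (rule Dz_row)
  ultimately have kk: "n - 1 \<le> kk" by linarith
  have "(s0, plac_class n row) \<in> plac_component n s0 \<times> plac_component n s0"
    unfolding plac_component_def using relpowp_imp_rtranclp[OF pr] by auto
  then have "enat kk \<le> comp_diameter n (plac_component n s0)"
    unfolding comp_diameter_def kk_def by (rule SUP_upper2) simp
  also have "\<dots> \<le> k_plac n" unfolding k_plac_def using s0 by (rule SUP_upper)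
  finally show ?thesis using kk by (meson enat_ord_simps(1) order_trans)
qed

theorem mainTheorem2:
  fixes n :: nat
  assumes "n \<ge> 2"
  shows "enat (n - 1) \<le> k_plac n \<and> k_plac n \<le> enat (2 * n - 3)"
  using lower[OF assms] upper[OF assms] by simp

end
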